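(* Let $y,t$ be formal variables. Then, as formal power series in $t$ with coefficients polynomial in $y$, $$\sum_{n\ge 1}\sum_{[\pi]\in\mathfrak{C}_n^o}y^{\operatorname{drop}_{eo}([\pi])}t^n = (y-1)t^2+ \sum_{m\ge 1}\frac{m!(m-1)!\,t^{2m}}{\prod_{k=1}^m \big(1+k(k+1)(1-y)t^2\big)}+\sum_{m\ge 1}\frac{\big((m-1)!\big)^2t^{2m-1}}{\prod_{k=1}^m \big(1+k(k-1)(1-y)t^2\big)}.$$
   Context: For $n\ge1$, a cycle on $[n]=\{1,\dots,n\}$ is an equivalence class $[\pi]$ of permutations $\pi=\pi_1\cdots\pi_n$ of $[n]$ (in one-line notation) under cyclic rotation of the entries; the set of cycles on $[n]$ is $\mathfrak{C}_n$. Each cycle is represented by the permutation $\pi$ with $\pi_1=1$, and indices are read modulo $n$ (so $\pi_{n+1}=\pi_1$). A drop of $[\pi]$ is a consecutive pair $(\pi_i,\pi_{i+1})$, $1\le i\le n$, with $\pi_i>\pi_{i+1}$; drops do not depend on the choice of rotation. By convention, the unique cycle $[(1)]\in\mathfrak{C}_1$ has exactly one drop $(\star,1)$, where $\star$ is considered neither even nor odd. A drop $(a,b)$ is odd-odd if $a$ and $b$ are both odd, and even-odd if $a$ is even and $b$ is odd. $\operatorname{drop}_{oo}([\pi])$ and $\operatorname{drop}_{eo}([\pi])$ denote the numbers of odd-odd and even-odd drops of $[\pi]$, respectively. Finally $\mathfrak{C}_n^o$ is the set of cycles $[\pi]\in\mathfrak{C}_n$ such that for every drop $(\pi_i,\pi_{i+1})$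 of $[\pi]$, the entry $\pi_{i+1}$ is odd. *)

theory Defs
  imports "HOL-Computational_Algebra.Formal_Power_Series"
          "HOL-Computational_Algebra.Polynomial"
          "HOL-Computational_Algebra.Fraction_Field"
begin

text \<open>A cycle on [n] is represented by its unique rotation pi (a list) with first entry 1.\<close>
definition cycles :: "nat \<Rightarrow> nat list set" where
  "cycles n = {p. distinct p \<and> set p = {1..n} \<and> hd p = 1}"

definition drop_pos :: "nat list \<Rightarrow> nat set" where
  "drop_pos p = {i. i < length p \<and> p ! ((i + 1) mod length p) < p ! i}"

definition drop_eo :: "nat list \<Rightarrow> nat" where
  "drop_eo p = card {i \<in> drop_pos p. even (p ! i) \<and> odd (p ! ((i + 1) mod length p))}"

definition drop_oo :: "nat list \<Rightarrow> nat" where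
  "drop_oo p = card {i \<in> drop_pos p. odd (p ! i) \<and> odd (p ! ((i + 1) mod length p))}"

definition cycles_o :: "nat \<Rightarrow> nat list set" where
  "cycles_o n = {p \<in> cycles n. \<forall>i \<in> drop_pos p. odd (p ! ((i + 1) mod length p))}"

definition yvar :: "int poly fract" where
  "yvar = Fract [:0, 1:] 1"

end

theory Submission
  imports Defs
begin


definition E :: "nat list \<Rightarrow> (nat \<times> nat) set" where
  "E p = set (zip p (rotate1 p))"

lemma E_rotate1: "E (rotate1 l) = E l"
proof (cases l)
  case Nil then show ?thesis by simp
next
  case (Cons x xs)
  show ?thesis
  proof (cases xs)
    case Nil then show ?thesis using Cons by simp
  next
    case (Cons y ys)
    have "E (rotate1 l) = set (zip (y#ys@[x]) (ys@[x]@[y]))"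
      using Cons \<open>l = x # xs\<close> by (simp add: E_def)
    also have "\<dots> = set (zip (y#ys) (ys@[x]) @ zip [x] [y])"
      using zip_append[of "y#ys" "ys@[x]" "[x]" "[y]"] by simp
    also have "\<dots> = E l" using Cons \<open>l = x # xs\<close> by (auto simp: E_def)
    finally show ?thesis .
  qed
qed

lemma E_swap: "E (xs @ zs) = E (zs @ xs)"
proof (induction xs arbitrary: zs)
  case Nil then show ?case by simp
next
  case (Cons x xs)
  have "E ((x#xs) @ zs) = E (rotate1 (x # (xs @ zs)))" by (simp only: E_rotate1 append_Cons)
  also have "\<dots> = E (xs @ (zs @ [x]))" by simp
  also have "\<dots> = E ((zs @ [x]) @ xs)" by (rule Cons.IH)
  finally show ?case by simp
qed

lemma E_nth: "E p = {(p!i, rotate1 p ! i) | i. i < length p}"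
  unfolding E_def by (auto simp: set_zip)

lemma E_fst_unique:
  assumes "distinct p" "(x,y) \<in> E p" "(x,y') \<in> E p" shows "y = y'"
proof -
  obtain i j where "i < length p" "j < length p" "x = p!i" "y = rotate1 p ! i" "x = p!j" "y' = rotate1 p ! j"
    using assms(2,3) unfolding E_nth by auto
  with assms(1) have "i = j" by (simp add: nth_eq_iff_index_eq)
  thus ?thesis using \<open>y = _\<close> \<open>y' = _\<close> by simp
qed

lemma E_snd_unique:
  assumes "distinct p" "(x,y) \<in> E p" "(x',y) \<in> E p" shows "x = x'"
proof -
  obtain i j where "i < length p" "j < length p" "x = p!i" "y = rotate1 p ! i" "x' = p!j" "y = rotate1 p ! j"
    using assms(2,3) unfolding E_nth by auto
  moreover have "distinct (rotate1 p)" using assms(1) by simp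
  ultimately have "i = j" by (simp add: nth_eq_iff_index_eq)
  thus ?thesis using \<open>x = _\<close> \<open>x' = _\<close> by simp
qed

lemma E_fst: "fst ` E p = set p"
proof -
  show ?thesis unfolding E_def by (metis list.set_map map_fst_zip length_rotate1)
qed

lemma E_snd: "snd ` E p = set p"
proof -
  have "snd ` E p = set (rotate1 p)" unfolding E_def by (metis list.set_map map_snd_zip length_rotate1)
  thus ?thesis by simp
qed

lemma E_ex: "x \<in> set p \<Longrightarrow> \<exists>y. (x,y) \<in> E p"
  using E_fst[of p] by force

lemma E_subset: "E p \<subseteq> set p \<times> set p"
  using E_fst[of p] E_snd[of p] by force

lemma finite_E: "finite (E p)" unfolding E_def by simp

lemma E_cons: "E (a # zs) = insert (a, hd (zs @ [a])) (set (zip zs (tl (zs @ [a]))))"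
proof -
  have "zs @ [a] = hd (zs @ [a]) # tl (zs @ [a])" by (cases zs) auto
  then have "zip (a # zs) (zs @ [a]) = (a, hd (zs @ [a])) # zip zs (tl (zs @ [a]))"
    by (metis zip_Cons_Cons)
  thus ?thesis unfolding E_def by simp
qed

lemma E_cons2: "E (a # n # zs) = insert (a, n) (insert (n, hd (zs @ [a])) (set (zip zs (tl (zs @ [a])))))"
proof -
  have "zs @ [a] = hd (zs @ [a]) # tl (zs @ [a])" by (cases zs) auto
  then have "zip (n # zs) (zs @ [a]) = (n, hd (zs @ [a])) # zip zs (tl (zs @ [a]))"
    by (metis zip_Cons_Cons)
  thus ?thesis unfolding E_def by simp
qed

definition ins :: "nat \<Rightarrow> nat \<Rightarrow> nat list \<Rightarrow> nat list" where
  "ins n a q = concat (map (\<lambda>x. if x = a then [a, n] else [x]) q)"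

lemma ins_noa: "a \<notin> set xs \<Longrightarrow> concat (map (\<lambda>x. if x = a then [a, n] else [x]) xs) = xs"
  by (induction xs) auto

lemma ins_split: "a \<notin> set xs \<Longrightarrow> a \<notin> set ys \<Longrightarrow> ins n a (xs @ a # ys) = xs @ a # n # ys"
  unfolding ins_def by (simp add: ins_noa)

lemma E_ins:
  assumes "distinct q" "n \<notin> set q" "(a,b) \<in> E q"
  shows "E (ins n a q) = insert (a,n) (insert (n,b) (E q - {(a,b)}))"
proof -
  have "a \<in> set q" using assms(3) E_subset by blast
  then obtain xs ys where q: "q = xs @ a # ys" by (meson split_list)
  have axs: "a \<notin> set xs" "a \<notin> set ys" using assms(1) q by auto
  define zs where "zs = ys @ xs"
  have azs: "a \<notin> set zs" using axs zs_def by auto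
  have Eq: "E q = E (a # zs)" unfolding q zs_def using E_swap[of xs "a # ys"] by simp
  have Ei: "E (ins n a q) = E (a # n # zs)" unfolding q zs_def ins_split[OF axs]
    using E_swap[of xs "a # n # ys"] by simp
  have dz: "distinct (a # zs)" using assms(1) q zs_def by auto
  have "(a, hd (zs @ [a])) \<in> E (a # zs)" by (simp add: E_cons)
  hence b: "b = hd (zs @ [a])" using E_fst_unique[OF dz] assms(3) Eq by metis
  have nR: "(a,b) \<notin> set (zip zs (tl (zs @ [a])))" using azs by (auto dest: set_zip_leftD)
  have e1: "E (a # n # zs) = insert (a,n) (insert (n,b) (set (zip zs (tl (zs @ [a])))))"
    by (simp only: E_cons2 b)
  have e2: "E (a # zs) = insert (a,b) (set (zip zs (tl (zs @ [a]))))"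
    by (simp only: E_cons b)
  show ?thesis unfolding Ei Eq e1 e2 using nR by blast
qed

lemma filter_ins: "n \<notin> set q \<Longrightarrow> filter (\<lambda>x. x \<noteq> n) (ins n a q) = q"
  unfolding ins_def by (induction q) auto



definition S :: "nat list \<Rightarrow> (nat \<times> nat) set" where
  "S p = {e \<in> E p. snd e < fst e \<and> even (fst e) \<and> odd (snd e)}"

definition Od :: "nat list \<Rightarrow> (nat \<times> nat) set" where
  "Od p = {e \<in> E p. odd (snd e)}"

lemma drop_eo_E: assumes "distinct p" shows "drop_eo p = card (S p)"
proof -
  let ?g = "\<lambda>i. (p!i, rotate1 p ! i)"
  let ?A = "{i \<in> drop_pos p. even (p ! i) \<and> odd (p ! ((i + 1) mod length p))}"
  have inj: "inj_on ?g ?A" using assms by (auto simp: inj_on_def drop_pos_def nth_eq_iff_index_eq)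
  have "?g ` ?A = S p"
  proof
    show "?g ` ?A \<subseteq> S p"
      by (auto simp: S_def E_nth drop_pos_def nth_rotate1)
    show "S p \<subseteq> ?g ` ?A"
    proof
      fix e assume "e \<in> S p"
      then obtain i where "i < length p" "e = ?g i" "rotate1 p ! i < p ! i" "even (p!i)" "odd (rotate1 p ! i)"
        by (auto simp: S_def E_nth)
      thus "e \<in> ?g ` ?A" by (auto simp: drop_pos_def nth_rotate1 image_def)
    qed
  qed
  thus ?thesis unfolding drop_eo_def using card_image[OF inj] by simp
qed

lemma cycles_o_E: "p \<in> cycles_o n \<longleftrightarrow> p \<in> cycles n \<and> (\<forall>(x,y)\<in>E p. y < x \<longrightarrow> odd y)"
proof -
  have "(\<forall>i\<in>drop_pos p. odd (p ! ((i+1) mod length p))) \<longleftrightarrow> (\<forall>(x,y)\<in>E p. y < x \<longrightarrow> odd y)"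
  proof
    assume h: "\<forall>i\<in>drop_pos p. odd (p ! ((i+1) mod length p))"
    show "\<forall>(x,y)\<in>E p. y < x \<longrightarrow> odd y"
    proof
      fix e assume "e \<in> E p"
      then obtain i where "i < length p" "e = (p!i, rotate1 p ! i)" unfolding E_nth by auto
      thus "case e of (x,y) \<Rightarrow> y < x \<longrightarrow> odd y" using h by (auto simp: drop_pos_def nth_rotate1)
    qed
  next
    assume h: "\<forall>(x,y)\<in>E p. y < x \<longrightarrow> odd y"
    show "\<forall>i\<in>drop_pos p. odd (p ! ((i+1) mod length p))"
    proof
      fix i assume "i \<in> drop_pos p"
      hence i: "i < length p" "p ! ((i+1) mod length p) < p ! i" by (auto simp: drop_pos_def)
      hence "(p!i, p ! ((i+1) mod length p)) \<in> E p" unfolding E_nth by (auto simp: nth_rotate1)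
      thus "odd (p ! ((i+1) mod length p))" using h i by auto
    qed
  qed
  thus ?thesis unfolding cycles_o_def by blast
qed

lemma ins_props:
  assumes "distinct q" "n \<notin> set q" "a \<in> set q"
  shows "distinct (ins n a q)" "set (ins n a q) = insert n (set q)" "hd (ins n a q) = hd q"
proof -
  obtain xs ys where q: "q = xs @ a # ys" using assms(3) by (meson split_list)
  have axs: "a \<notin> set xs" "a \<notin> set ys" using assms(1) q by auto
  have i: "ins n a q = xs @ a # n # ys" unfolding q by (rule ins_split[OF axs])
  show "distinct (ins n a q)" "set (ins n a q) = insert n (set q)" "hd (ins n a q) = hd q"
    unfolding i using assms by (auto simp: q hd_append)
qed

lemma cycles_finite: "finite (cycles n)"
proof -
  have "cycles n \<subseteq> {xs. set xs \<subseteq> {1..n} \<and> length xs = n}"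
    by (auto simp: cycles_def dest: distinct_card)
  thus ?thesis using finite_lists_length_eq[of "{1..n}" n] by (auto intro: finite_subset)
qed

lemma cycles_o_finite: "finite (cycles_o n)"
  using cycles_finite[of n] by (auto simp: cycles_o_def intro: finite_subset)

lemma main_bij:
  assumes n2: "n \<ge> 2"
  shows "bij_betw (\<lambda>(q,e). ins n (fst e) q) (SIGMA q:cycles_o (n-1). Od q) (cycles_o n)"
proof -
  have into: "ins n a q \<in> cycles_o n \<and> E (ins n a q) = insert (a,n) (insert (n,b) (E q - {(a,b)}))"
    if q: "q \<in> cycles_o (n-1)" and e: "(a,b) \<in> Od q" for q a b
  proof -
    have qc: "distinct q" "set q = {1..n-1}" "hd q = 1" and qo: "\<forall>(x,y)\<in>E q. y < x \<longrightarrow> odd y"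
      using q by (auto simp: cycles_o_E cycles_def)
    have nq: "n \<notin> set q" using qc by auto
    have ab: "(a,b) \<in> E q" "odd b" using e by (auto simp: Od_def)
    have aq: "a \<in> set q" "b \<in> set q" using ab E_subset by blast+
    have Ei: "E (ins n a q) = insert (a,n) (insert (n,b) (E q - {(a,b)}))"
      by (rule E_ins[OF qc(1) nq ab(1)])
    have "ins n a q \<in> cycles n"
      using ins_props[OF qc(1) nq aq(1)] qc n2 by (auto simp: cycles_def)
    moreover have "\<forall>(x,y)\<in>E (ins n a q). y < x \<longrightarrow> odd y"
    proof
      fix e assume "e \<in> E (ins n a q)"
      hence "e = (a,n) \<or> e = (n,b) \<or> e \<in> E q" unfolding Ei by blast
      moreover have "a < n" using aq(1) qc(2) by auto
      ultimately show "case e of (x,y) \<Rightarrow> y < x \<longrightarrow> odd y" using qo ab(2) by auto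
    qed
    ultimately show ?thesis using Ei by (simp add: cycles_o_E)
  qed
  show ?thesis
  proof (rule bij_betwI')
    fix x y assume x: "x \<in> (SIGMA q:cycles_o (n-1). Od q)" and y: "y \<in> (SIGMA q:cycles_o (n-1). Od q)"
    obtain q a b where xq: "x = (q,(a,b))" by (metis prod.exhaust)
    obtain q' a' b' where yq: "y = (q',(a',b'))" by (metis prod.exhaust)
    have q: "q \<in> cycles_o (n-1)" "(a,b) \<in> Od q" using x xq by auto
    have q': "q' \<in> cycles_o (n-1)" "(a',b') \<in> Od q'" using y yq by auto
    have nq: "n \<notin> set q" "n \<notin> set q'" using q(1) q'(1) by (auto simp: cycles_o_def cycles_def)
    show "((\<lambda>(q,e). ins n (fst e) q) x = (\<lambda>(q,e). ins n (fst e) q) y) = (x = y)"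
    proof
      assume eq: "(\<lambda>(q,e). ins n (fst e) q) x = (\<lambda>(q,e). ins n (fst e) q) y"
      hence eq': "ins n a q = ins n a' q'" using xq yq by simp
      have "q = q'" using filter_ins[OF nq(1), of a] filter_ins[OF nq(2), of a'] eq' by simp
      have i1: "ins n a q \<in> cycles_o n" "E (ins n a q) = insert (a,n) (insert (n,b) (E q - {(a,b)}))"
        using into[OF q] by auto
      have i2: "E (ins n a' q') = insert (a',n) (insert (n,b') (E q' - {(a',b')}))"
        using into[OF q'] by auto
      have d: "distinct (ins n a q)" using i1(1) by (simp add: cycles_o_def cycles_def)
      have m1: "(a,n) \<in> E (ins n a q)" "(n,b) \<in> E (ins n a q)" by (simp_all only: i1(2)) blast+
      have "(a',n) \<in> E (ins n a' q')" "(n,b') \<in> E (ins n a' q')" by (simp_all only: i2) blast+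
      hence m2: "(a',n) \<in> E (ins n a q)" "(n,b') \<in> E (ins n a q)" by (simp_all only: eq')
      have "a = a'" by (rule E_snd_unique[OF d m1(1) m2(1)])
      moreover have "b = b'" by (rule E_fst_unique[OF d m1(2) m2(2)])
      ultimately show "x = y" using xq yq \<open>q = q'\<close> by simp
    qed simp
  next
    fix x assume "x \<in> (SIGMA q:cycles_o (n-1). Od q)"
    then obtain q a b where "x = (q,(a,b))" "q \<in> cycles_o (n-1)" "(a,b) \<in> Od q" by auto
    thus "(\<lambda>(q,e). ins n (fst e) q) x \<in> cycles_o n" using into[of q a b] by simp
  next
    fix p assume p: "p \<in> cycles_o n"
    have pc: "distinct p" "set p = {1..n}" "hd p = 1" and po: "\<forall>(x,y)\<in>E p. y < x \<longrightarrow> odd y"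
      using p by (auto simp: cycles_o_E cycles_def)
    have "n \<in> set p" using pc n2 by auto
    then obtain xs ys where p1: "p = xs @ n # ys" by (meson split_list)
    have "xs \<noteq> []" using pc(3) n2 p1 by auto
    then obtain xs' a where xs: "xs = xs' @ [a]" by (metis rev_exhaust)
    define q where "q = xs' @ a # ys"
    have pq: "p = ins n a q" unfolding q_def p1 xs using pc(1) p1 xs
      by (subst ins_split) auto
    have qd: "distinct q" "n \<notin> set q" using pc(1) p1 xs q_def by auto
    have "set q = set p - {n}" using pc(1) p1 xs q_def by auto
    hence sq: "set q = {1..n-1}" using pc(2) by auto
    have hq: "hd q = 1" using pc(3) p1 xs q_def by (cases xs') auto
    have "a \<in> set q" using q_def by simp
    then obtain b where ab: "(a,b) \<in> E q" using E_ex by blast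
    have Ep: "E p = insert (a,n) (insert (n,b) (E q - {(a,b)}))" unfolding pq by (rule E_ins[OF qd ab])
    have "b \<in> set q" using ab E_subset by blast
    hence "b < n" using sq by auto
    hence ob: "odd b" using po Ep by auto
    have "q \<in> cycles_o (n-1)"
    proof -
      have "\<forall>(x,y)\<in>E q. y < x \<longrightarrow> odd y"
      proof
        fix e assume e: "e \<in> E q"
        show "case e of (x,y) \<Rightarrow> y < x \<longrightarrow> odd y"
        proof (cases "e = (a,b)")
          case True thus ?thesis using ob by auto
        next
          case False hence "e \<in> E p" using e Ep by blast
          thus ?thesis using po by blast
        qed
      qed
      thus ?thesis using qd sq hq by (simp add: cycles_o_E cycles_def)
    qed
    moreover have "(a,b) \<in> Od q" using ab ob by (simp add: Od_def)
    ultimately show "\<exists>x\<in>(SIGMA q:cycles_o (n-1). Od q). p = (\<lambda>(q,e). ins n (fst e) q) x"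
      using pq by force
  qed
qed



lemma into_lemma:
  assumes n2: "n \<ge> 2" and q: "q \<in> cycles_o (n-1)" and e: "(a,b) \<in> Od q"
  shows "ins n a q \<in> cycles_o n" "E (ins n a q) = insert (a,n) (insert (n,b) (E q - {(a,b)}))"
    "a < n" "b < n" "odd b" "n \<notin> set q" "(a,b) \<in> E q"
proof -
  have qc: "distinct q" "set q = {1..n-1}" "hd q = 1" and qo: "\<forall>(x,y)\<in>E q. y < x \<longrightarrow> odd y"
    using q by (auto simp: cycles_o_E cycles_def)
  show nq: "n \<notin> set q" using qc by auto
  show ab: "(a,b) \<in> E q" "odd b" using e by (auto simp: Od_def)
  have aq: "a \<in> set q" "b \<in> set q" using ab E_subset by blast+
  show Ei: "E (ins n a q) = insert (a,n) (insert (n,b) (E q - {(a,b)}))"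
    by (rule E_ins[OF qc(1) nq ab(1)])
  show an: "a < n" "b < n" using aq qc(2) by auto
  have "ins n a q \<in> cycles n"
    using ins_props[OF qc(1) nq aq(1)] qc n2 by (auto simp: cycles_def)
  moreover have "\<forall>(x,y)\<in>E (ins n a q). y < x \<longrightarrow> odd y"
  proof
    fix e assume "e \<in> E (ins n a q)"
    hence "e = (a,n) \<or> e = (n,b) \<or> e \<in> E q" unfolding Ei by blast
    thus "case e of (x,y) \<Rightarrow> y < x \<longrightarrow> odd y" using qo ab(2) an by auto
  qed
  ultimately show "ins n a q \<in> cycles_o n" by (simp add: cycles_o_E)
qed

lemma card_odd: "card {y \<in> {1..m::nat}. odd y} = (m+1) div 2"
proof (induction m)
  case 0 then show ?case by simp
next
  case (Suc m)
  have eq: "{y \<in> {1..Suc m}. odd y} = {y \<in> {1..m}. odd y} \<union> (if odd (Suc m) then {Suc m} else {})"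
    by (auto simp: le_Suc_eq)
  show ?case unfolding eq using Suc by auto
qed

lemma card_Od: assumes "q \<in> cycles m" shows "card (Od q) = (m+1) div 2"
proof -
  have d: "distinct q" and sq: "set q = {1..m}" using assms by (auto simp: cycles_def)
  have inj: "inj_on snd (Od q)"
    by (rule inj_onI) (auto simp: Od_def intro: E_snd_unique[OF d])
  have "snd ` Od q = {y \<in> set q. odd y}"
  proof
    show "snd ` Od q \<subseteq> {y \<in> set q. odd y}" using E_snd[of q] by (auto simp: Od_def)
    show "{y \<in> set q. odd y} \<subseteq> snd ` Od q"
    proof
      fix y assume "y \<in> {y \<in> set q. odd y}"
      then obtain e where "e \<in> E q" "snd e = y" "odd y" using E_snd[of q] by force
      thus "y \<in> snd ` Od q" by (auto simp: Od_def)
    qed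
  qed
  thus ?thesis using card_image[OF inj] sq card_odd[of m] by simp
qed

lemma drop_eo_ins:
  assumes n2: "n \<ge> 2" and q: "q \<in> cycles_o (n-1)" and e: "(a,b) \<in> Od q"
  shows "drop_eo (ins n a q) = (if (a,b) \<in> S q then card (S q) - 1 else card (S q)) + (if even n then 1 else 0)"
proof -
  note I = into_lemma[OF n2 q e]
  have d: "distinct (ins n a q)" using I(1) by (simp add: cycles_o_def cycles_def)
  have nS: "(n,b) \<notin> S q" using I(6) E_subset by (auto simp: S_def)
  have Sins: "S (ins n a q) = (S q - {(a,b)}) \<union> (if even n then {(n,b)} else {})"
    unfolding S_def I(2) using I(3,4,5) by auto
  have fS: "finite (S q)" using finite_E by (simp add: S_def)
  show ?thesis unfolding drop_eo_E[OF d] Sins using nS fS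
    by (auto simp: card_insert_if)
qed

definition Yp :: "int poly" where "Yp = [:0,1:]"

definition G :: "nat \<Rightarrow> int poly" where "G n = (\<Sum>p\<in>cycles_o n. Yp ^ drop_eo p)"

lemma pderiv_sum': "pderiv (sum f A) = (\<Sum>x\<in>A. pderiv (f x))"
  by (induction A rule: infinite_finite_induct) (auto simp: pderiv_add)

lemma pderiv_Yp_pow: "pderiv (Yp ^ d) = of_nat d * Yp ^ (d - 1)"
  by (simp add: pderiv_power Yp_def pderiv_pCons of_nat_poly smult_conv_map_poly) 

lemma local_step:
  assumes "d \<le> k"
  shows "of_nat d * Yp ^ (d - 1) + of_nat (k - d) * Yp ^ d
       = of_nat k * Yp ^ d + (1 - Yp) * pderiv (Yp ^ d)"
proof (cases d)
  case 0 then show ?thesis by simp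
next
  case (Suc d')
  have h: "of_nat (k - d) = (of_nat k - of_nat d :: int poly)" using assms by (simp add: of_nat_diff)
  show ?thesis unfolding pderiv_Yp_pow h by (simp add: Suc algebra_simps)
qed

lemma G_rec:
  assumes n2: "n \<ge> 2"
  shows "G n = Yp ^ (if even n then 1 else 0) * (of_nat (n div 2) * G (n-1) + (1 - Yp) * pderiv (G (n-1)))"
proof -
  let ?eps = "(if even n then 1 else 0) :: nat"
  let ?k = "n div 2"
  have fin: "finite (cycles_o (n-1))" "\<forall>q\<in>cycles_o (n-1). finite (Od q)"
    using cycles_o_finite finite_E by (auto simp: Od_def)
  have "G n = (\<Sum>x\<in>(SIGMA q:cycles_o (n-1). Od q). Yp ^ drop_eo ((\<lambda>(q,e). ins n (fst e) q) x))"
    unfolding G_def by (rule sum.reindex_bij_betw[OF main_bij[OF n2], symmetric])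
  also have "\<dots> = (\<Sum>q\<in>cycles_o (n-1). \<Sum>e\<in>Od q. Yp ^ drop_eo (ins n (fst e) q))"
    by (subst sum.Sigma[OF fin]) (simp add: case_prod_beta)
  also have "\<dots> = (\<Sum>q\<in>cycles_o (n-1). Yp ^ ?eps * (of_nat ?k * Yp ^ drop_eo q + (1 - Yp) * pderiv (Yp ^ drop_eo q)))"
  proof (rule sum.cong[OF refl])
    fix q assume q: "q \<in> cycles_o (n-1)"
    have dq: "distinct q" and qc: "q \<in> cycles (n-1)" using q by (auto simp: cycles_o_def cycles_def)
    let ?d = "card (S q)"
    have SO: "S q \<subseteq> Od q" by (auto simp: S_def Od_def)
    have fO: "finite (Od q)" using fin q by auto
    have cO: "card (Od q) = ?k" using card_Od[OF qc] n2 by simp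
    have dk: "?d \<le> ?k" using card_mono[OF fO SO] cO by simp
    have "(\<Sum>e\<in>Od q. Yp ^ drop_eo (ins n (fst e) q))
        = (\<Sum>e\<in>Od q. Yp ^ ?eps * (if e \<in> S q then Yp ^ (?d - 1) else Yp ^ ?d))"
    proof (rule sum.cong[OF refl])
      fix e assume e: "e \<in> Od q"
      obtain a b where ab: "e = (a,b)" by (metis prod.exhaust)
      have "e \<in> S q \<Longrightarrow> ?d \<ge> 1" using fO SO by (metis card_0_eq finite_subset empty_iff less_one not_le)
      thus "Yp ^ drop_eo (ins n (fst e) q) = Yp ^ ?eps * (if e \<in> S q then Yp ^ (?d - 1) else Yp ^ ?d)"
        using drop_eo_ins[OF n2 q, of a b] e ab by (auto simp: power_add mult.commute)
    qed
    also have "\<dots> = Yp ^ ?eps * (\<Sum>e\<in>Od q. (if e \<in> S q then Yp ^ (?d - 1) else Yp ^ ?d))"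
      by (simp add: sum_distrib_left)
    also have "(\<Sum>e\<in>Od q. (if e \<in> S q then Yp ^ (?d - 1) else Yp ^ ?d))
        = of_nat ?d * Yp ^ (?d - 1) + of_nat (?k - ?d) * Yp ^ ?d"
    proof -
      have "(\<Sum>e\<in>Od q. (if e \<in> S q then Yp ^ (?d - 1) else Yp ^ ?d))
          = (\<Sum>e\<in>Od q \<inter> {e. e \<in> S q}. Yp ^ (?d - 1)) + (\<Sum>e\<in>Od q \<inter> - {e. e \<in> S q}. Yp ^ ?d)"
        by (rule sum.If_cases[OF fO])
      moreover have "Od q \<inter> {e. e \<in> S q} = S q" using SO by auto
      moreover have "Od q \<inter> - {e. e \<in> S q} = Od q - S q" by auto
      moreover have "card (Od q - S q) = ?k - ?d" using card_Diff_subset[OF finite_subset[OF SO fO] SO] cO by simp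
      ultimately show ?thesis by simp
    qed
    finally show "(\<Sum>e\<in>Od q. Yp ^ drop_eo (ins n (fst e) q))
        = Yp ^ ?eps * (of_nat ?k * Yp ^ drop_eo q + (1 - Yp) * pderiv (Yp ^ drop_eo q))"
      using local_step[OF dk] drop_eo_E[OF dq] by simp
  qed
  also have "\<dots> = Yp ^ ?eps * (of_nat ?k * G (n-1) + (1 - Yp) * pderiv (G (n-1)))"
    unfolding G_def pderiv_sum' by (simp add: sum_distrib_left sum.distrib distrib_left)
  finally show ?thesis .
qed

lemma G_1: "G 1 = 1"
proof -
  have "cycles 1 = {[1]}"
  proof
    show "{[1]} \<subseteq> cycles 1" by (auto simp: cycles_def)
    show "cycles 1 \<subseteq> {[1]}"
    proof
      fix p assume "p \<in> cycles 1"
      hence "distinct p" "set p = {1}" by (auto simp: cycles_def)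
      hence "length p = 1" using distinct_card by fastforce
      then obtain x where "p = [x]" by (metis One_nat_def length_0_conv length_Suc_conv)
      thus "p \<in> {[1]}" using \<open>set p = {1}\<close> by simp
    qed
  qed
  moreover have "E [1] = {(1,1)}" by (simp add: E_def)
  ultimately have "cycles_o 1 = {[1]}" by (auto simp: cycles_o_E)
  moreover have "S [1] = {}" using \<open>E [1] = _\<close> by (auto simp: S_def)
  hence "drop_eo [1] = 0" by (simp add: drop_eo_E)
  ultimately show ?thesis by (simp add: G_def)
qed



fun hb :: "nat \<Rightarrow> nat \<Rightarrow> nat" where
  "hb m 0 = 1"
| "hb 0 (Suc j) = 0"
| "hb (Suc m) (Suc j) = hb m (Suc j) + Suc m * Suc (Suc m) * hb (Suc m) j"

definition r_even :: "nat \<Rightarrow> nat \<Rightarrow> int" where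
  "r_even N j = (if j < N then int (fact (N-j) * fact (N-j-1) * hb (N-j) j) else if j = N \<and> N = 1 then 1 else 0)"

definition r_odd :: "nat \<Rightarrow> nat \<Rightarrow> int" where
  "r_odd N j = (if j \<le> N then int (fact (N-j) * fact (N-j) * hb (N-j) j) else 0)"

definition rho :: "nat \<Rightarrow> nat \<Rightarrow> int" where
  "rho n j = (if even n then r_even (n div 2) j else r_odd (n div 2) j)"

lemma hb_0_Suc: "j \<ge> 1 \<Longrightarrow> hb 0 j = 0" by (cases j) auto

lemma rec_a:
  assumes "N \<ge> 1"
  shows "r_odd N j = (int N - int j) * r_even N j"
proof -
  consider "j < N" | "j = N" | "j > N" by linarith
  thus ?thesis
  proof cases
    case 1
    then obtain L where L: "N - j = Suc L" by (metis Suc_diff_Suc)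
    have "N - j - 1 = L" using L by simp
    moreover have "int N - int j = int (Suc L)" using L 1 by simp
    ultimately show ?thesis using 1 L by (simp add: r_odd_def r_even_def algebra_simps)
  next
    case 2 thus ?thesis using assms by (simp add: r_odd_def r_even_def hb_0_Suc)
  next
    case 3 thus ?thesis by (simp add: r_odd_def r_even_def)
  qed
qed

lemma rec_b:
  assumes "N \<ge> 1"
  shows "r_even N j = (int N - int j) * r_odd (N-1) j
      + (if j \<ge> 1 then (int N - int j + 1) * r_odd (N-1) (j-1) else 0)"
proof -
  consider "j = 0" | "1 \<le> j \<and> j < N" | "j = N" | "j > N" by linarith
  thus ?thesis
  proof cases
    case 1
    then obtain M where M: "N = Suc M" using assms by (metis Suc_pred' less_le_trans zero_less_one)
    show ?thesis using 1 by (simp add: r_odd_def r_even_def M algebra_simps)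
  next
    case 2
    then obtain L where L: "N - j = Suc L" by (metis Suc_diff_Suc)
    obtain j' where j': "j = Suc j'" using 2 by (metis Suc_pred' less_le_trans zero_less_one)
    have e1: "N - j - 1 = L" "N - 1 - j = L" "N - 1 - (j - 1) = Suc L" using L 2 by auto
    have e2: "int N - int j = int (Suc L)" using L 2 by simp
    have hb: "hb (Suc L) j = hb L j + Suc L * Suc (Suc L) * hb (Suc L) j'" using j' by simp
    show ?thesis using 2 L j' unfolding r_odd_def r_even_def e1 e2
      by (simp add: hb algebra_simps)
  next
    case 3
    then show ?thesis using assms by (cases "N - 1") (auto simp: r_odd_def r_even_def hb_0_Suc)
  next
    case 4 thus ?thesis using assms by (auto simp: r_odd_def r_even_def)
  qed
qed

lemma rho_rec:
  assumes "n \<ge> 1"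
  shows "rho (Suc n) j = (int (Suc n div 2) - int j) * rho n j
     + (if even (Suc n) \<and> j \<ge> 1 then (int (Suc n div 2) - int j + 1) * rho n (j-1) else 0)"
proof (cases "even n")
  case True
  then obtain N where N: "n = 2 * N" by blast
  have "N \<ge> 1" using assms N by simp
  thus ?thesis using rec_a[of N j] N by (simp add: rho_def)
next
  case False
  then obtain M where M: "n = 2 * M + 1" by (metis oddE)
  have "Suc n = 2 * Suc M" "Suc n div 2 = Suc M" "n div 2 = M" using M by auto
  thus ?thesis using rec_b[of "Suc M" j] M by (simp add: rho_def)
qed

lemma rho_big: "j > n \<Longrightarrow> n \<ge> 1 \<Longrightarrow> rho n j = 0"
  by (auto simp: rho_def r_even_def r_odd_def)

definition Up :: "int poly" where "Up = Yp - 1"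

lemma pderiv_Yp: "pderiv Yp = 1" by (simp add: Yp_def pderiv_pCons)
lemma pderiv_Up: "pderiv Up = 1" by (simp add: Up_def pderiv_diff pderiv_Yp)

lemma pderiv_of_int_mult: "pderiv (of_int c * p) = of_int c * pderiv (p :: int poly)"
  by (simp add: pderiv_mult of_int_poly pderiv_smult)

lemma pderiv_of_int: "pderiv (of_int c :: int poly) = 0"
  by (simp add: of_int_poly)

lemma psi_term:
  "of_nat k * (of_int c * Up ^ j) + (1 - Yp) * pderiv (of_int c * Up ^ j)
     = of_int (c * (int k - int j)) * Up ^ j"
proof (cases j)
  case 0 then show ?thesis by (simp add: pderiv_of_int)
next
  case (Suc j')
  have Y: "Yp = Up + 1" by (simp add: Up_def)
  have sm: "smult a p = of_int a * p" for a and p :: "int poly" by (simp add: of_int_poly)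
  show ?thesis unfolding pderiv_of_int_mult pderiv_power pderiv_Up Suc Y sm
    by (simp add: algebra_simps)
qed

lemma pderiv_sum'': "pderiv (sum f A) = (\<Sum>x\<in>A. pderiv (f x))"
  by (induction A rule: infinite_finite_induct) (auto simp: pderiv_add)

lemma psi_sum:
  "of_nat k * (\<Sum>j\<le>n. of_int (c j) * Up ^ j) + (1 - Yp) * pderiv (\<Sum>j\<le>n. of_int (c j) * Up ^ j)
     = (\<Sum>j\<le>n. of_int (c j * (int k - int j)) * Up ^ j)"
  unfolding pderiv_sum'' sum_distrib_left sum.distrib[symmetric] psi_term by simp

lemma G_closed: "n \<ge> 1 \<Longrightarrow> G n = (\<Sum>j\<le>n. of_int (rho n j) * Up ^ j)"
proof (induction n rule: dec_induct)
  case base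
  have "rho 1 0 = 1" "rho 1 1 = 0" by (auto simp: rho_def r_odd_def)
  thus ?case using G_1 by simp
next
  case (step n)
  let ?k = "Suc n div 2"
  have G: "G (Suc n) = Yp ^ (if even (Suc n) then 1 else 0) *
      (\<Sum>j\<le>n. of_int (rho n j * (int ?k - int j)) * Up ^ j)"
    using G_rec[of "Suc n"] step psi_sum[of ?k "rho n" n] by simp
  have A: "(\<Sum>j\<le>Suc n. of_int ((int ?k - int j) * rho n j) * Up ^ j)
      = (\<Sum>j\<le>n. of_int (rho n j * (int ?k - int j)) * Up ^ j)"
    using rho_big[of n "Suc n"] step by (simp add: mult.commute)
  have B: "(\<Sum>j\<le>Suc n. of_int (if j \<ge> 1 then (int ?k - int j + 1) * rho n (j-1) else 0) * Up ^ j)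
      = Up * (\<Sum>j\<le>n. of_int (rho n j * (int ?k - int j)) * Up ^ j)"
    by (subst sum.atMost_Suc_shift) (simp add: sum_distrib_left algebra_simps)
  show ?case
  proof (cases "even (Suc n)")
    case True
    have "(\<Sum>j\<le>Suc n. of_int (rho (Suc n) j) * Up ^ j)
       = (\<Sum>j\<le>Suc n. of_int ((int ?k - int j) * rho n j) * Up ^ j
          + of_int (if j \<ge> 1 then (int ?k - int j + 1) * rho n (j-1) else 0) * Up ^ j)"
      using True by (intro sum.cong[OF refl]) (auto simp: rho_rec[OF step(1)] distrib_right algebra_simps)
    also have "\<dots> = G (Suc n)" unfolding sum.distrib A B G using True by (simp add: Up_def algebra_simps)
    finally show ?thesis by simp
  next
    case False
    have "(\<Sum>j\<le>Suc n. of_int (rho (Suc n) j) * Up ^ j)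
       = (\<Sum>j\<le>Suc n. of_int ((int ?k - int j) * rho n j) * Up ^ j)"
      using False by (intro sum.cong[OF refl]) (auto simp: rho_rec[OF step(1)])
    also have "\<dots> = G (Suc n)" unfolding A G using False by simp
    finally show ?thesis by simp
  qed
qed



type_synonym K = "int poly fract"

definition emb :: "int poly \<Rightarrow> K" where "emb p = Fract p 1"

lemma emb_add [simp]: "emb (p + q) = emb p + emb q" by (simp add: emb_def)
lemma emb_mult [simp]: "emb (p * q) = emb p * emb q" by (simp add: emb_def)
lemma emb_diff [simp]: "emb (p - q) = emb p - emb q" by (simp add: emb_def)
lemma emb_minus [simp]: "emb (- p) = - emb p" by (simp add: emb_def)
lemma emb_1 [simp]: "emb 1 = 1" by (simp add: emb_def One_fract_def)
lemma emb_0 [simp]: "emb 0 = 0" by (simp add: emb_def Zero_fract_def)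
lemma emb_pow [simp]: "emb (p ^ k) = emb p ^ k" by (induction k) auto
lemma emb_sum [simp]: "emb (sum f A) = (\<Sum>x\<in>A. emb (f x))"
  by (induction A rule: infinite_finite_induct) auto
lemma emb_of_nat [simp]: "emb (of_nat k) = of_nat k" by (simp add: emb_def Fract_of_nat_eq)
lemma emb_of_int [simp]: "emb (of_int c) = of_int c"
proof (cases c rule: int_cases)
  case (nonneg m) thus ?thesis by (metis emb_of_nat of_int_of_nat_eq)
next
  case (neg m) thus ?thesis by (metis emb_minus emb_of_nat of_int_minus of_int_of_nat_eq)
qed

lemma yvar_emb: "yvar = emb Yp" by (simp add: yvar_def emb_def Yp_def)
lemma u_emb: "yvar - 1 = emb Up" by (simp add: yvar_emb Up_def)

lemma LHS_coeff:
  assumes "n \<ge> 1"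
  shows "(\<Sum>p \<in> cycles_o n. yvar ^ drop_eo p) = (\<Sum>j\<le>n. of_int (rho n j) * (yvar - 1) ^ j)"
proof -
  have "(\<Sum>p \<in> cycles_o n. yvar ^ drop_eo p) = emb (G n)" by (simp add: G_def yvar_emb)
  also have "\<dots> = (\<Sum>j\<le>n. of_int (rho n j) * (yvar - 1) ^ j)"
    unfolding G_closed[OF assms] by (simp add: u_emb)
  finally show ?thesis .
qed

definition qf :: "'a::comm_ring_1 \<Rightarrow> nat \<Rightarrow> nat \<Rightarrow> 'a" where
  "qf u M i = (if even i then of_nat (hb M (i div 2)) * u ^ (i div 2) else 0)"

definition tm :: "'a::comm_ring_1 \<Rightarrow> nat \<Rightarrow> nat \<Rightarrow> 'a" where
  "tm u m n = of_nat (fact (Suc m) * fact m) * (if n < 2 * Suc m then 0 else qf u (Suc m) (n - 2 * Suc m))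
     + of_nat (fact m * fact m) * (if n < 2 * Suc m - 1 then 0 else qf u m (n - (2 * Suc m - 1)))"

lemma sum_reflect: "(\<Sum>j<N. f j) = (\<Sum>m<N. f (N - Suc m))"
  by (rule sum.reindex_bij_witness[of _ "\<lambda>j. N - Suc j" "\<lambda>j. N - Suc j"]) auto

lemma E_main:
  fixes u :: "'a::comm_ring_1"
  assumes "n \<ge> 1"
  shows "(\<Sum>j\<le>n. of_int (rho n j) * u ^ j) = (if n = 2 then u else 0) + (\<Sum>m\<le>n. tm u m n)"
proof (cases "even n")
  case True
  then obtain N where N: "n = 2 * N" by blast
  have N1: "N \<ge> 1" using N assms by simp
  have L: "(\<Sum>j\<le>n. of_int (rho n j) * u ^ j) = (\<Sum>j<N. of_int (r_even N j) * u ^ j) + (if N = 1 then u else 0)"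
  proof -
    have "(\<Sum>j\<le>n. of_int (rho n j) * u ^ j) = (\<Sum>j\<le>N. of_int (r_even N j) * u ^ j)"
      by (rule sum.mono_neutral_cong_right) (auto simp: N rho_def r_even_def)
    also have "\<dots> = (\<Sum>j<N. of_int (r_even N j) * u ^ j) + (if N = 1 then u else 0)"
      by (simp add: lessThan_Suc_atMost[symmetric] r_even_def)
    finally show ?thesis .
  qed
  have R: "(\<Sum>m\<le>n. tm u m n) = (\<Sum>m<N. of_nat (fact (Suc m) * fact m * hb (Suc m) (N - Suc m)) * u ^ (N - Suc m))"
  proof (rule sum.mono_neutral_cong_right)
    show "finite {..n}" by simp
    show "{..<N} \<subseteq> {..n}" using N by auto
    show "\<forall>i\<in>{..n} - {..<N}. tm u i n = 0"
      by (auto simp: tm_def qf_def N)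
    fix m assume m: "m \<in> {..<N}"
    have e1: "n - 2 * Suc m = 2 * (N - Suc m)" using m N by auto
    have e2: "odd (n - (2 * Suc m - 1))" using m N by auto
    show "tm u m n = of_nat (fact (Suc m) * fact m * hb (Suc m) (N - Suc m)) * u ^ (N - Suc m)"
      using m N e2 unfolding tm_def qf_def e1 by auto
  qed
  have "(\<Sum>j<N. of_int (r_even N j) * u ^ j) = (\<Sum>m<N. of_nat (fact (Suc m) * fact m * hb (Suc m) (N - Suc m)) * u ^ (N - Suc m))"
  proof (subst sum_reflect, rule sum.cong[OF refl])
    fix m assume m: "m \<in> {..<N}"
    have "N - (N - Suc m) = Suc m" "N - (N - Suc m) - 1 = m" using m by auto
    hence "r_even N (N - Suc m) = int (fact (Suc m) * fact m * hb (Suc m) (N - Suc m))"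
      using m by (simp add: r_even_def)
    thus "of_int (r_even N (N - Suc m)) * u ^ (N - Suc m) = of_nat (fact (Suc m) * fact m * hb (Suc m) (N - Suc m)) * u ^ (N - Suc m)"
      by (metis of_int_of_nat_eq)
  qed
  thus ?thesis using L R N by simp
next
  case False
  then obtain N where N: "n = 2 * N + 1" by (metis oddE)
  have L: "(\<Sum>j\<le>n. of_int (rho n j) * u ^ j) = (\<Sum>j<Suc N. of_int (r_odd N j) * u ^ j)"
    by (rule sum.mono_neutral_cong_right) (auto simp: N rho_def r_odd_def)
  have R: "(\<Sum>m\<le>n. tm u m n) = (\<Sum>m<Suc N. of_nat (fact m * fact m * hb m (N - m)) * u ^ (N - m))"
  proof (rule sum.mono_neutral_cong_right)
    show "finite {..n}" by simp
    show "{..<Suc N} \<subseteq> {..n}" using N by auto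
    show "\<forall>i\<in>{..n} - {..<Suc N}. tm u i n = 0"
      by (auto simp: tm_def qf_def N)
    fix m assume m: "m \<in> {..<Suc N}"
    have e1: "n - (2 * Suc m - 1) = 2 * (N - m)" using m N by auto
    have e2: "odd (n - 2 * Suc m) \<or> n < 2 * Suc m" using m N by auto
    show "tm u m n = of_nat (fact m * fact m * hb m (N - m)) * u ^ (N - m)"
      using m N e2 unfolding tm_def qf_def e1 by auto
  qed
  have "(\<Sum>j<Suc N. of_int (r_odd N j) * u ^ j) = (\<Sum>m<Suc N. of_nat (fact m * fact m * hb m (N - m)) * u ^ (N - m))"
  proof (subst sum_reflect, rule sum.cong[OF refl])
    fix m assume m: "m \<in> {..<Suc N}"
    have e: "N - (Suc N - Suc m) = m" "Suc N - Suc m = N - m" using m by auto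
    hence "r_odd N (Suc N - Suc m) = int (fact m * fact m * hb m (N - m))"
      using m by (simp add: r_odd_def)
    thus "of_int (r_odd N (Suc N - Suc m)) * u ^ (Suc N - Suc m) = of_nat (fact m * fact m * hb m (N - m)) * u ^ (N - m)"
      unfolding e(2) by (metis of_int_of_nat_eq)
  qed
  thus ?thesis using L R N by simp
qed


unbundle fps_syntax


definition Pb :: "nat \<Rightarrow> K fps" where
  "Pb M = (\<Prod>k = 1..M. 1 + fps_const (of_nat (k * (k + 1)) * (1 - yvar)) * fps_X ^ 2)"

lemma Pa_eq: "(\<Prod>k = 1..Suc m. 1 + fps_const (of_nat (k * (k - 1)) * (1 - yvar)) * fps_X ^ 2) = Pb m"
proof (induction m)
  case 0 then show ?case by (simp add: Pb_def)
next
  case (Suc m)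
  have "(\<Prod>k = 1..Suc (Suc m). 1 + fps_const (of_nat (k * (k - 1)) * (1 - yvar)) * fps_X ^ 2)
      = (1 + fps_const (of_nat (Suc (Suc m) * (Suc (Suc m) - 1)) * (1 - yvar)) * fps_X ^ 2) *
        (\<Prod>k = 1..Suc m. 1 + fps_const (of_nat (k * (k - 1)) * (1 - yvar)) * fps_X ^ 2)"
    by (rule prod.nat_ivl_Suc') simp
  also have "\<dots> = (1 + fps_const (of_nat (Suc m * (Suc m + 1)) * (1 - yvar)) * fps_X ^ 2) * Pb m"
    using Suc by (simp add: mult.commute)
  also have "\<dots> = Pb (Suc m)" unfolding Pb_def by (subst prod.nat_ivl_Suc') auto
  finally show ?case .
qed

lemma Pb_inv_mult: "Pb M * Abs_fps (qf (yvar - 1) M) = 1"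
proof (induction M)
  case 0
  have "Abs_fps (qf (yvar - 1) 0) = 1"
  proof (rule fps_ext)
    fix i
    show "Abs_fps (qf (yvar - 1) 0) $ i = (1 :: K fps) $ i"
    proof (cases "i = 0")
      case True thus ?thesis by (simp add: qf_def)
    next
      case False
      hence "even i \<Longrightarrow> i div 2 \<ge> 1" by auto
      thus ?thesis using False by (auto simp: qf_def hb_0_Suc)
    qed
  qed
  thus ?case by (simp add: Pb_def)
next
  case (Suc M)
  let ?u = "yvar - 1 :: K"
  let ?c = "of_nat (Suc M * (Suc M + 1)) * (1 - yvar) :: K"
  have P: "Pb (Suc M) = (1 + fps_const ?c * fps_X ^ 2) * Pb M"
    unfolding Pb_def by (subst prod.nat_ivl_Suc') auto
  have F: "(1 + fps_const ?c * fps_X ^ 2) * Abs_fps (qf ?u (Suc M)) = Abs_fps (qf ?u M)"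
  proof (rule fps_ext)
    fix i
    have "((1 + fps_const ?c * fps_X ^ 2) * Abs_fps (qf ?u (Suc M))) $ i
        = qf ?u (Suc M) i + ?c * (if i < 2 then 0 else qf ?u (Suc M) (i - 2))"
      by (simp add: distrib_right mult.assoc fps_X_power_mult_nth)
    also have "\<dots> = qf ?u M i"
    proof (cases "i < 2")
      case True
      thus ?thesis by (cases i) (auto simp: qf_def)
    next
      case False
      then obtain i' where i': "i = Suc (Suc i')" by (metis add_2_eq_Suc le_add_diff_inverse not_less)
      show ?thesis
      proof (cases "even i")
        case True
        then obtain j where j: "i' = 2 * j" using i' by auto
        have cu: "?c = - of_nat (Suc M * (Suc M + 1)) * ?u" by (simp add: algebra_simps)
        have "i div 2 = Suc j" "i' div 2 = j" "(i - 2) = i'" using i' j by auto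
        thus ?thesis using True i' j unfolding qf_def cu
          by (simp add: algebra_simps)
      next
        case False thus ?thesis using i' by (simp add: qf_def)
      qed
    qed
    finally show "((1 + fps_const ?c * fps_X ^ 2) * Abs_fps (qf ?u (Suc M))) $ i = Abs_fps (qf ?u M) $ i"
      by simp
  qed
  have "Pb (Suc M) * Abs_fps (qf ?u (Suc M)) = Pb M * ((1 + fps_const ?c * fps_X ^ 2) * Abs_fps (qf ?u (Suc M)))"
    unfolding P by (simp add: algebra_simps)
  also have "\<dots> = 1" unfolding F by (rule Suc.IH)
  finally show ?case .
qed

lemma inv_Pb: "inverse (Pb M) = Abs_fps (qf (yvar - 1) M)"
  by (rule fps_inverse_unique[OF Pb_inv_mult])



theorem theorem1p4:
  defines "T \<equiv> (\<lambda>m. fps_const (of_nat (fact (Suc m) * fact m)) * fps_X ^ (2 * Suc m)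
          * inverse (\<Prod>k = 1..Suc m. 1 + fps_const (of_nat (k * (k + 1)) * (1 - yvar)) * fps_X ^ 2)
        + fps_const (of_nat (fact m * fact m)) * fps_X ^ (2 * Suc m - 1)
          * inverse (\<Prod>k = 1..Suc m. 1 + fps_const (of_nat (k * (k - 1)) * (1 - yvar)) * fps_X ^ 2))"
  shows "summable T \<and>
    Abs_fps (\<lambda>n. if n = 0 then 0 else \<Sum>p \<in> cycles_o n. yvar ^ drop_eo p)
      = fps_const (yvar - 1) * fps_X ^ 2 + suminf T"
proof -
  have Tn: "T m $ n = tm (yvar - 1) m n" for m n
  proof -
    have "T m = fps_const (of_nat (fact (Suc m) * fact m)) * (fps_X ^ (2 * Suc m) * Abs_fps (qf (yvar - 1) (Suc m)))
        + fps_const (of_nat (fact m * fact m)) * (fps_X ^ (2 * Suc m - 1) * Abs_fps (qf (yvar - 1) m))"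
      unfolding T_def Pa_eq Pb_def[symmetric] inv_Pb by (simp add: mult.assoc)
    thus ?thesis unfolding tm_def by (simp only: fps_add_nth fps_mult_left_const_nth fps_X_power_mult_nth) simp
  qed
  have T0: "T m $ n = 0" if "n < 2 * m + 1" for m n
    using that unfolding Tn tm_def by auto
  define Sx where "Sx = Abs_fps (\<lambda>n. \<Sum>m\<le>n. T m $ n)"
  have sums: "T sums Sx"
    unfolding sums_def
  proof (rule tendsto_fpsI)
    fix n
    show "\<forall>\<^sub>F M in sequentially. sum T {..<M} $ n = Sx $ n"
    proof (rule eventually_sequentiallyI[of "Suc n"])
      fix M assume M: "Suc n \<le> M"
      have "sum T {..<M} $ n = (\<Sum>m<M. T m $ n)" by (simp add: fps_sum_nth)
      also have "\<dots> = (\<Sum>m\<le>n. T m $ n)"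
        by (rule sum.mono_neutral_cong_right) (use M T0 in auto)
      finally show "sum T {..<M} $ n = Sx $ n" by (simp add: Sx_def)
    qed
  qed
  have "Abs_fps (\<lambda>n. if n = 0 then 0 else \<Sum>p \<in> cycles_o n. yvar ^ drop_eo p)
      = fps_const (yvar - 1) * fps_X ^ 2 + Sx"
  proof (rule fps_ext)
    fix n
    show "Abs_fps (\<lambda>n. if n = 0 then 0 else \<Sum>p \<in> cycles_o n. yvar ^ drop_eo p) $ n
        = (fps_const (yvar - 1) * fps_X ^ 2 + Sx) $ n"
    proof (cases "n = 0")
      case True thus ?thesis using T0[of 0] by (simp add: Sx_def)
    next
      case False
      hence n1: "n \<ge> 1" by simp
      have "(fps_const (yvar - 1) * fps_X ^ 2 + Sx) $ n = (if n = 2 then yvar - 1 else 0) + (\<Sum>m\<le>n. tm (yvar - 1) m n)"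
        by (simp add: Sx_def Tn)
      also have "\<dots> = (\<Sum>j\<le>n. of_int (rho n j) * (yvar - 1) ^ j)"
        using E_main[OF n1, of "yvar - 1"] by simp
      also have "\<dots> = (\<Sum>p \<in> cycles_o n. yvar ^ drop_eo p)" using LHS_coeff[OF n1] by simp
      finally show ?thesis using False by simp
    qed
  qed
  thus ?thesis using sums sums_unique[OF sums] sums_summable[OF sums] by simp
qed

end
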